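(* Let $\mathscr P=(P,G_P)$ and $\mathscr Q=(Q,G_Q)$ be causal graphical models over $\mathbf X=(X_1,\dots,X_d)$ such that $G_P$ and $G_Q$ have the same skeleton, and let $X_i\to X_j$ be an edge of $G_Q$ such that $X_j\to X_i$ is an edge of $G_P$ (a flipped edge). Let $P^e$ be an interventional distribution generated from $\mathscr P$ with target set $\mathcal I_e$. (i) If there exists an unblocked path $e\overset{G_P}{\to}X_i$ given $\mathbf{PA}_j^{G_Q}\setminus\{X_i\}$, then $P^e(X_j\mid\mathbf{PA}_j^{G_Q})\neq P(X_j\mid\mathbf{PA}_j^{G_Q})$. (ii) If there exists an unblocked path $e\overset{G_P}{\to}X_j$ given $\mathbf{PA}_i^{G_Q}$, then $P^e(X_i\mid\mathbf{PA}_i^{G_Q})\neq P(X_i\mid\mathbf{PA}_i^{G_Q})$.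
   Context: All distributions have densities with respect to Lebesgue measure; $[d]=\{1,\dots,d\}$. A causal graphical model (CGM) is a pair $(P,G)$ of a distribution over $\mathbf X$ and a DAG on $[d]$ with $P$ Markovian w.r.t. $G$ ($P(\mathbf X)=\prod_iP(X_i\mid\mathbf{PA}_i^G)$, $\mathbf{PA}_i^G$ = parents of $X_i$ in $G$). Interventional distributions: environment $e$ has target set $\mathcal I_e\subseteq[d]$ and $P^e(\mathbf X)=\prod_{i\in\mathcal I_e}\tilde P(X_i\mid\mathbf{PA}_i^{G_P})\prod_{i\notin\mathcal I_e}P(X_i\mid\mathbf{PA}_i^{G_P})$, with $P^e(X_i\mid\mathbf{PA}_i^{G_P})=P(X_i\mid\mathbf{PA}_i^{G_P})$ iff $i\notin\mathcal I_e$; mechanisms are independent causal mechanisms and pseudo causal sufficiency holds (unobserved confounders are fixed within each environment). Standing faithfulness assumption: $P$ is faithful to $G_P$, and the multi-environment distribution is faithful to the augmented DAG obtained from $G_P$ by adding an environment node $e$ with edges $e\to X_k$ for all $k\in\mathcal I_e$, so that $P^e(X\mid\mathbf Z)\ne P(X\mid\mathbf Z)$ whenever $e$ and $X$ are d-connected given $\mathbf Z$ in that augmented DAG. Unblocked path: for a DAG $G$ over $\mathbf X$ and $\mathbf Z\subseteq\mathbf X$, there is a (directed) unblocked path $e\overset{G}{\to}X_i$ given $\mathbf Z$ if there exist $k\in\mathcal I_e$ and a directed path $X_k\to\cdots\to X_i$ in $G$ none of whose vertices lies in $\mathbf Z$; if $k=i$ this condition is trivially satisfied. *)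

theory Defs
  imports "HOL-Analysis.Analysis"
begin

text \<open>Variables X_1..X_d are indexed by 1..d; a point is x :: nat => real
 (extensional on {1..d}); the reference measure is the product Lebesgue measure.\<close>

abbreviation prodM :: "nat set \<Rightarrow> (nat \<Rightarrow> real) measure" where
  "prodM S \<equiv> PiM S (\<lambda>_. lborel)"

definition is_density :: "nat \<Rightarrow> ((nat \<Rightarrow> real) \<Rightarrow> real) \<Rightarrow> bool" where
  "is_density d p \<longleftrightarrow> p \<in> borel_measurable (prodM {1..d}) \<and> (\<forall>x. 0 \<le> p x)
     \<and> (\<integral>\<^sup>+ x. ennreal (p x) \<partial>prodM {1..d}) = 1"

definition marg :: "nat \<Rightarrow> ((nat \<Rightarrow> real) \<Rightarrow> real) \<Rightarrow> nat set \<Rightarrow> (nat \<Rightarrow> real) \<Rightarrow> real" where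
  "marg d p S x = enn2real (\<integral>\<^sup>+ y. ennreal (p (merge S ({1..d} - S) (x, y))) \<partial>prodM ({1..d} - S))"

text \<open>Conditional density of X_i given X_S (with the convention t/0 = 0).\<close>
definition cond :: "nat \<Rightarrow> ((nat \<Rightarrow> real) \<Rightarrow> real) \<Rightarrow> nat \<Rightarrow> nat set \<Rightarrow> (nat \<Rightarrow> real) \<Rightarrow> real" where
  "cond d p i S x = marg d p (insert i S) x / marg d p S x"

text \<open>Equality of conditional distributions P(X_i | X_S) = Q(X_i | X_S):
 the conditional densities agree almost everywhere.\<close>
definition cond_eq :: "nat \<Rightarrow> ((nat \<Rightarrow> real) \<Rightarrow> real) \<Rightarrow> ((nat \<Rightarrow> real) \<Rightarrow> real) \<Rightarrow> nat \<Rightarrow> nat set \<Rightarrow> bool" where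
  "cond_eq d p q i S \<longleftrightarrow> (AE x in prodM (insert i S). cond d p i S x = cond d q i S x)"

text \<open>DAGs on [d] as edge relations; (a,b) in G means a -> b.\<close>
definition dag :: "nat \<Rightarrow> (nat \<times> nat) set \<Rightarrow> bool" where
  "dag d G \<longleftrightarrow> G \<subseteq> {1..d} \<times> {1..d} \<and> acyclic G"

definition pa :: "(nat \<times> nat) set \<Rightarrow> nat \<Rightarrow> nat set" where
  "pa G i = {k. (k, i) \<in> G}"

definition skeleton :: "(nat \<times> nat) set \<Rightarrow> (nat \<times> nat) set" where
  "skeleton G = G \<union> G\<inverse>"

definition cgm :: "nat \<Rightarrow> ((nat \<Rightarrow> real) \<Rightarrow> real) \<Rightarrow> (nat \<times> nat) set \<Rightarrow> bool" where
  "cgm d p G \<longleftrightarrow> dag d G \<and> is_density d p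
     \<and> (AE x in prodM {1..d}. p x = (\<Prod>i\<in>{1..d}. cond d p i (pa G i) x))"

definition interventional :: "nat \<Rightarrow> ((nat \<Rightarrow> real) \<Rightarrow> real) \<Rightarrow> (nat \<times> nat) set \<Rightarrow> nat set
     \<Rightarrow> ((nat \<Rightarrow> real) \<Rightarrow> real) \<Rightarrow> bool" where
  "interventional d p G I pe \<longleftrightarrow> I \<subseteq> {1..d} \<and> is_density d pe
     \<and> (AE x in prodM {1..d}. pe x = (\<Prod>i\<in>I. cond d pe i (pa G i) x)
                                     * (\<Prod>i\<in>{1..d} - I. cond d p i (pa G i) x))
     \<and> (\<forall>i\<in>{1..d}. cond_eq d pe p i (pa G i) \<longleftrightarrow> i \<notin> I)"

text \<open>Augmented DAG: environment node e is node 0, with edges e -> X_k for k in I.\<close>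
definition augment :: "(nat \<times> nat) set \<Rightarrow> nat set \<Rightarrow> (nat \<times> nat) set" where
  "augment G I = G \<union> {(0, k) | k. k \<in> I}"

definition collider :: "(nat \<times> nat) set \<Rightarrow> nat \<Rightarrow> nat \<Rightarrow> nat \<Rightarrow> bool" where
  "collider G u v w \<longleftrightarrow> (u, v) \<in> G \<and> (w, v) \<in> G"

definition d_connected :: "(nat \<times> nat) set \<Rightarrow> nat \<Rightarrow> nat \<Rightarrow> nat set \<Rightarrow> bool" where
  "d_connected G a b Z \<longleftrightarrow> (\<exists>ps. ps \<noteq> [] \<and> hd ps = a \<and> last ps = b \<and> distinct ps
     \<and> (\<forall>m. Suc m < length ps \<longrightarrow> (ps!m, ps!Suc m) \<in> G \<or> (ps!Suc m, ps!m) \<in> G)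
     \<and> (\<forall>m. 0 < m \<and> Suc m < length ps \<longrightarrow>
          (if collider G (ps!(m-1)) (ps!m) (ps!Suc m)
           then (\<exists>w\<in>Z. (ps!m, w) \<in> G\<^sup>*) else ps!m \<notin> Z)))"

definition unblocked :: "(nat \<times> nat) set \<Rightarrow> nat set \<Rightarrow> nat \<Rightarrow> nat set \<Rightarrow> bool" where
  "unblocked G I i Z \<longleftrightarrow> (\<exists>k\<in>I. k = i \<or> (\<exists>ps. ps \<noteq> [] \<and> hd ps = k \<and> last ps = i
     \<and> (\<forall>m. Suc m < length ps \<longrightarrow> (ps!m, ps!Suc m) \<in> G) \<and> (\<forall>v\<in>set ps. v \<notin> Z)))"

text \<open>Multi-environment faithfulness (standing assumption): d-connection of e and X
 given Z in the augmented DAG implies P^e(X | Z) differs from P(X | Z).\<close>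
definition env_faithful :: "nat \<Rightarrow> ((nat \<Rightarrow> real) \<Rightarrow> real) \<Rightarrow> (nat \<times> nat) set \<Rightarrow> nat set
     \<Rightarrow> ((nat \<Rightarrow> real) \<Rightarrow> real) \<Rightarrow> bool" where
  "env_faithful d p G I pe \<longleftrightarrow> (\<forall>X\<in>{1..d}. \<forall>Z. Z \<subseteq> {1..d} - {X} \<longrightarrow>
     d_connected (augment G I) 0 X Z \<longrightarrow> \<not> cond_eq d pe p X Z)"

end

theory Submission
  imports Defs
begin

lemma distinct_walk:
  assumes "successively P ps" "ps \<noteq> []"
  shows "\<exists>qs. qs \<noteq> [] \<and> hd qs = hd ps \<and> last qs = last ps \<and> distinct qs
     \<and> set qs \<subseteq> set ps \<and> successively P qs"
  using assms
proof (induction "length ps" arbitrary: ps rule: less_induct)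
  case less
  show ?case
  proof (cases "distinct ps")
    case True
    then show ?thesis using less.prems by blast
  next
    case False
    then obtain xs ys zs y where ps: "ps = xs@[y]@ys@[y]@zs"
      using not_distinct_decomp by blast
    define ps' where "ps' = xs@[y]@zs"
    have len: "length ps' < length ps" using ps ps'_def by simp
    have s: "successively P ps'" using less.prems(1) unfolding ps ps'_def
      by (auto simp: successively_append_iff successively_Cons)
    have ne: "ps' \<noteq> []" using ps'_def by simp
    obtain qs where qs: "qs \<noteq> [] \<and> hd qs = hd ps' \<and> last qs = last ps' \<and> distinct qs
     \<and> set qs \<subseteq> set ps' \<and> successively P qs"
      using less.hyps[OF len s ne] by blast
    have "hd ps' = hd ps" unfolding ps ps'_def by (cases xs) auto
    moreover have "last ps' = last ps" unfolding ps ps'_def by (cases zs) auto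
    moreover have "set ps' \<subseteq> set ps" unfolding ps ps'_def by auto
    ultimately show ?thesis using qs by auto
  qed
qed

lemma first_hit:
  "successively P ps \<Longrightarrow> ps \<noteq> [] \<Longrightarrow> last ps \<in> T \<Longrightarrow>
   \<exists>qs. qs \<noteq> [] \<and> hd qs = hd ps \<and> last qs \<in> T \<and> set (butlast qs) \<inter> T = {}
     \<and> set qs \<subseteq> set ps \<and> successively P qs"
proof (induction ps)
  case Nil
  then show ?case by simp
next
  case (Cons x xs)
  show ?case
  proof (cases "x \<in> T")
    case True
    then show ?thesis by (intro exI[of _ "[x]"]) auto
  next
    case False
    then have xs: "xs \<noteq> []" using Cons.prems by auto
    have "successively P xs" using Cons.prems(1) xs by (auto simp add: successively_Cons)
    then obtain qs where qs: "qs \<noteq> [] \<and> hd qs = hd xs \<and> last qs \<in> T \<and> set (butlast qs) \<inter> T = {}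
     \<and> set qs \<subseteq> set xs \<and> successively P qs"
      using Cons.IH xs Cons.prems by auto
    have "P x (hd xs)" using Cons.prems(1) xs by (simp add: successively_Cons)
    then show ?thesis using qs False xs
      by (intro exI[of _ "x # qs"]) (auto simp: successively_Cons)
  qed
qed

lemma butlast_distinct_ne:
  assumes "distinct rs" "x \<in> set (butlast rs)"
  shows "x \<noteq> last rs"
proof -
  have "rs \<noteq> []" using assms(2) by auto
  then have "rs = butlast rs @ [last rs]" by simp
  then show ?thesis using assms by (metis distinct_append disjoint_iff list.set_intros(1))
qed

lemma good_path:
  assumes "successively P ps" "ps \<noteq> []" "last ps \<in> T"
  shows "\<exists>qs. qs \<noteq> [] \<and> hd qs = hd ps \<and> last qs \<in> T \<and> set (butlast qs) \<inter> T = {}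
     \<and> set qs \<subseteq> set ps \<and> successively P qs \<and> distinct qs"
proof -
  obtain qs where qs: "qs \<noteq> [] \<and> hd qs = hd ps \<and> last qs \<in> T \<and> set (butlast qs) \<inter> T = {}
     \<and> set qs \<subseteq> set ps \<and> successively P qs" using first_hit[OF assms] by blast
  then obtain rs where rs: "rs \<noteq> [] \<and> hd rs = hd qs \<and> last rs = last qs \<and> distinct rs
     \<and> set rs \<subseteq> set qs \<and> successively P rs" using distinct_walk by blast
  have "set (butlast rs) \<subseteq> set (butlast qs)"
  proof
    fix x assume x: "x \<in> set (butlast rs)"
    then have "x \<noteq> last qs" using butlast_distinct_ne rs by metis
    moreover have "x \<in> set qs" using x rs by (meson in_set_butlastD subsetD)
    moreover have "set qs = set (butlast qs) \<union> {last qs}"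
      using qs by (metis append_butlast_last_id set_append empty_set list.simps(15) Un_empty_right)
    ultimately show "x \<in> set (butlast qs)" by auto
  qed
  then show ?thesis using qs rs by (intro exI[of _ rs]) auto
qed

lemma walk_in:
  "successively (\<lambda>a b. (a,b) \<in> G) ps \<Longrightarrow> G \<subseteq> A \<times> A \<Longrightarrow> ps \<noteq> [] \<Longrightarrow> hd ps \<in> A \<Longrightarrow> set ps \<subseteq> A"
  apply (induction ps)
   apply (auto simp: successively_Cons subset_iff)
  by (metis empty_iff empty_set)

lemma acyc2: "acyclic G \<Longrightarrow> (a,b) \<in> G \<Longrightarrow> (b,a) \<notin> G"
  by (meson acyclic_def trancl.r_into_trancl trancl_into_trancl)

lemma L_dir:
  assumes ac: "acyclic G" and ne: "qs \<noteq> []" and ds: "distinct qs"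
    and sc: "successively (\<lambda>a b. (a,b) \<in> G) qs" and hI: "hd qs \<in> I"
    and z0: "0 \<notin> set qs" and bz: "set (butlast qs) \<inter> Z = {}"
  shows "d_connected (augment G I) 0 (last qs) Z"
  unfolding d_connected_def
proof (intro exI[of _ "0 # qs"] conjI allI impI)
  show "distinct (0 # qs)" using ds z0 by simp
  show "last (0 # qs) = last qs" using ne by simp
next
  fix m assume m: "Suc m < length (0 # qs)"
  show "((0 # qs) ! m, (0 # qs) ! Suc m) \<in> augment G I \<or> ((0 # qs) ! Suc m, (0 # qs) ! m) \<in> augment G I"
  proof (cases m)
    case 0
    then show ?thesis using hI ne by (auto simp: augment_def hd_conv_nth)
  next
    case (Suc m')
    then show ?thesis using successively_nth[OF sc, of m'] m by (auto simp: augment_def)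
  qed
next
  fix m assume m: "0 < m \<and> Suc m < length (0 # qs)"
  then obtain m' where m': "m = Suc m'" by (cases m) auto
  have e: "(qs ! m', qs ! Suc m') \<in> G" using successively_nth[OF sc, of m'] m m' by auto
  have nz: "qs ! Suc m' \<noteq> 0" using z0 m m' by (metis length_Cons not_less_eq nth_mem)
  have nc: "\<not> collider (augment G I) ((0 # qs) ! (m-1)) ((0 # qs) ! m) ((0 # qs) ! Suc m)"
    using acyc2[OF ac e] nz m' by (auto simp: collider_def augment_def)
  have "qs ! m' \<in> set (butlast qs)" using m m'
    by (metis Suc_less_SucD length_Cons length_butlast less_diff_conv nth_butlast nth_mem Suc_eq_plus1)
  then have "qs ! m' \<notin> Z" using bz by auto
  then show "if collider (augment G I) ((0 # qs) ! (m-1)) ((0 # qs) ! m) ((0 # qs) ! Suc m)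
           then (\<exists>w\<in>Z. ((0 # qs) ! m, w) \<in> (augment G I)\<^sup>*) else (0 # qs) ! m \<notin> Z"
    using nc m' by simp
qed simp_all


lemma L_col:
  assumes ac: "acyclic G" and ne: "qs \<noteq> []" and ds: "distinct qs"
    and sc: "successively (\<lambda>a b. (a,b) \<in> G) qs" and hI: "hd qs \<in> I"
    and z0: "0 \<notin> set qs" and bz: "set (butlast qs) \<inter> Z = {}"
    and lz: "last qs \<in> Z" and ej: "(j, last qs) \<in> G" and jn: "j \<notin> set qs" and j0: "j \<noteq> 0"
  shows "d_connected (augment G I) 0 j Z"
  unfolding d_connected_def
proof (intro exI[of _ "0 # qs @ [j]"] conjI allI impI)
  define n where "n = length qs"
  have n1: "n \<ge> 1" using ne n_def by (cases qs) auto
  have pq: "(0 # qs @ [j]) ! Suc m' = qs ! m'" if "m' < n" for m'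
    using that n_def by (simp add: nth_append)
  have pj: "(0 # qs @ [j]) ! Suc n = j" using n_def by simp
  have lq: "last qs = qs ! (n - 1)" using ne n_def by (simp add: last_conv_nth)
  have len: "length (0 # qs @ [j]) = Suc (Suc n)" using n_def by simp
  show "distinct (0 # qs @ [j])" using ds z0 jn j0 by simp
  {
    fix m assume m: "Suc m < length (0 # qs @ [j])"
    show "((0 # qs @ [j]) ! m, (0 # qs @ [j]) ! Suc m) \<in> augment G I
        \<or> ((0 # qs @ [j]) ! Suc m, (0 # qs @ [j]) ! m) \<in> augment G I"
    proof (cases m)
      case 0
      then show ?thesis using hI ne pq[of 0] n1 by (auto simp: augment_def hd_conv_nth)
    next
      case (Suc m')
      show ?thesis
      proof (cases "Suc m' < n")
        case True
        then show ?thesis using successively_nth[OF sc, of m'] Suc pq[of m'] pq[of "Suc m'"] n_def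
          by (auto simp: augment_def)
      next
        case False
        then have "m' = n - 1" using m Suc len by auto
        then show ?thesis using Suc ej lq pq[of m'] pj n1 by (auto simp: augment_def)
      qed
    qed
  }
  {
    fix m assume m: "0 < m \<and> Suc m < length (0 # qs @ [j])"
    then obtain m' where m': "m = Suc m'" by (cases m) auto
    have mn: "m' < n" using m m' len by auto
    show "if collider (augment G I) ((0 # qs @ [j]) ! (m-1)) ((0 # qs @ [j]) ! m) ((0 # qs @ [j]) ! Suc m)
           then (\<exists>w\<in>Z. ((0 # qs @ [j]) ! m, w) \<in> (augment G I)\<^sup>*) else (0 # qs @ [j]) ! m \<notin> Z"
    proof (cases "Suc m' < n")
      case True
      have e: "(qs ! m', qs ! Suc m') \<in> G" using successively_nth[OF sc, of m'] True n_def by auto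
      have nz: "qs ! Suc m' \<noteq> 0" using z0 True n_def by (metis nth_mem)
      have nc: "\<not> collider (augment G I) ((0 # qs @ [j]) ! (m-1)) ((0 # qs @ [j]) ! m) ((0 # qs @ [j]) ! Suc m)"
        using acyc2[OF ac e] nz m' pq[of m'] pq[of "Suc m'"] True
        by (auto simp: collider_def augment_def)
      have "qs ! m' \<in> set (butlast qs)" using True n_def
        by (metis length_butlast less_diff_conv nth_butlast nth_mem Suc_eq_plus1)
      then have "qs ! m' \<notin> Z" using bz by auto
      then show ?thesis using nc m' pq[of m'] mn by simp
    next
      case False
      then have mv: "m' = n - 1" using mn by auto
      have pm: "(0 # qs @ [j]) ! m = last qs" using m' mv lq pq[of m'] mn by simp
      have pS: "(0 # qs @ [j]) ! Suc m = j" using m' mv n1 pj by simp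
      have pprev: "((0 # qs @ [j]) ! (m-1), last qs) \<in> augment G I"
      proof (cases m')
        case 0
        then have "n = 1" using mv n1 by simp
        then have "last qs = hd qs" using lq ne by (simp add: hd_conv_nth)
        then show ?thesis using 0 m' hI by (simp add: augment_def)
      next
        case (Suc m'')
        have "(qs ! m'', qs ! Suc m'') \<in> G" using successively_nth[OF sc, of m''] Suc mn n_def by auto
        then show ?thesis using Suc m' mv lq pq[of m''] mn by (simp add: augment_def)
      qed
      have col: "collider (augment G I) ((0 # qs @ [j]) ! (m-1)) ((0 # qs @ [j]) ! m) ((0 # qs @ [j]) ! Suc m)"
        using pprev pm pS ej by (simp add: collider_def augment_def)
      show ?thesis using col pm lz by auto
    qed
  }
qed simp_all


lemma unblocked_walk:
  assumes "unblocked G I t Z" "t \<notin> Z"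
  shows "\<exists>ps. ps \<noteq> [] \<and> hd ps \<in> I \<and> last ps = t \<and> successively (\<lambda>a b. (a,b) \<in> G) ps
     \<and> set ps \<inter> Z = {}"
proof -
  obtain k where k: "k \<in> I" and alt: "k = t \<or> (\<exists>ps. ps \<noteq> [] \<and> hd ps = k \<and> last ps = t
     \<and> (\<forall>m. Suc m < length ps \<longrightarrow> (ps!m, ps!Suc m) \<in> G) \<and> (\<forall>v\<in>set ps. v \<notin> Z))"
    using assms(1) unfolding unblocked_def by blast
  show ?thesis
  proof (cases "k = t")
    case True
    then show ?thesis using k assms(2) by (intro exI[of _ "[t]"]) auto
  next
    case False
    then obtain ps where "ps \<noteq> [] \<and> hd ps = k \<and> last ps = t
     \<and> (\<forall>m. Suc m < length ps \<longrightarrow> (ps!m, ps!Suc m) \<in> G) \<and> (\<forall>v\<in>set ps. v \<notin> Z)"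
      using alt by blast
    then show ?thesis using k by (intro exI[of _ ps]) (auto simp: successively_conv_nth)
  qed
qed

theorem lemma18:
  fixes d :: nat and p q pe :: "(nat \<Rightarrow> real) \<Rightarrow> real"
    and GP GQ :: "(nat \<times> nat) set" and I :: "nat set" and i j :: nat
  assumes "cgm d p GP" and "cgm d q GQ"
    and "skeleton GP = skeleton GQ"
    and "(i, j) \<in> GQ" and "(j, i) \<in> GP"
    and "interventional d p GP I pe"
    and "env_faithful d p GP I pe"
  shows "(unblocked GP I i (pa GQ j - {i}) \<longrightarrow> \<not> cond_eq d pe p j (pa GQ j))
       \<and> (unblocked GP I j (pa GQ i) \<longrightarrow> \<not> cond_eq d pe p i (pa GQ i))"
proof -
  have GPd: "GP \<subseteq> {1..d} \<times> {1..d}" "acyclic GP" using assms(1) unfolding cgm_def dag_def by blast+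
  have GQd: "GQ \<subseteq> {1..d} \<times> {1..d}" "acyclic GQ" using assms(2) unfolding cgm_def dag_def by blast+
  have Id: "I \<subseteq> {1..d}" using assms(6) unfolding interventional_def by blast
  have ij: "i \<noteq> j" by (metis acyc2 GPd(2) assms(5))
  have paS: "pa GQ x \<subseteq> {1..d} - {x}" for x
    unfolding pa_def using GQd(1) acyc2[OF GQd(2), of x x] by blast
  have iZj: "i \<in> pa GQ j" using assms(4) unfolding pa_def by blast
  have jZi: "j \<notin> pa GQ i" using acyc2[OF GQd(2) assms(4)] unfolding pa_def by blast
  have jd: "j \<in> {1..d}" "i \<in> {1..d}" using GPd(1) assms(5) by blast+
  have faith: "\<not> cond_eq d pe p X Z" if "X \<in> {1..d}" "Z \<subseteq> {1..d} - {X}"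
    "d_connected (augment GP I) 0 X Z" for X Z
    using assms(7) that unfolding env_faithful_def by blast
  have inside: "0 \<notin> set qs" if "successively (\<lambda>a b. (a,b) \<in> GP) qs" "qs \<noteq> []" "hd qs \<in> I" for qs
  proof -
    have "set qs \<subseteq> {1..d}" using walk_in[OF that(1) GPd(1) that(2)] that(3) Id by blast
    then show ?thesis by auto
  qed
  have part1: "\<not> cond_eq d pe p j (pa GQ j)" if ub: "unblocked GP I i (pa GQ j - {i})"
  proof -
    have "i \<notin> pa GQ j - {i}" by blast
    from unblocked_walk[OF ub this] obtain ps where p1: "ps \<noteq> []" and p2: "hd ps \<in> I"
     and p3: "last ps = i" and p4: "successively (\<lambda>a b. (a,b) \<in> GP) ps"
     and p5: "set ps \<inter> (pa GQ j - {i}) = {}" by blast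
    have "last ps \<in> {i,j}" using p3 by blast
    from good_path[OF p4 p1 this] obtain qs where q1: "qs \<noteq> []" and q2: "hd qs = hd ps"
      and q3: "last qs \<in> {i,j}" and q4: "set (butlast qs) \<inter> {i,j} = {}"
      and q5: "set qs \<subseteq> set ps" and q6: "successively (\<lambda>a b. (a,b) \<in> GP) qs" and q7: "distinct qs"
      by blast
    have hq: "hd qs \<in> I" using q2 p2 by simp
    have z0: "0 \<notin> set qs" using inside[OF q6 q1 hq] .
    have bz: "set (butlast qs) \<inter> pa GQ j = {}"
    proof -
      have "set (butlast qs) \<subseteq> set ps" using q5 by (meson in_set_butlastD subset_iff)
      then show ?thesis using p5 q4 by blast
    qed
    have "d_connected (augment GP I) 0 j (pa GQ j)"
    proof (cases "last qs = j")
      case True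
      then show ?thesis using L_dir[OF GPd(2) q1 q7 q6 hq z0 bz] by simp
    next
      case False
      then have li: "last qs = i" using q3 by blast
      have jn: "j \<notin> set qs"
      proof
        assume "j \<in> set qs"
        then have "j \<in> set (butlast qs @ [last qs])" using q1 by simp
        then show False using q4 li ij by auto
      qed
      have j0: "j \<noteq> 0" using jd by simp
      show ?thesis using L_col[OF GPd(2) q1 q7 q6 hq z0 bz] li iZj assms(5) jn j0 by simp
    qed
    then show ?thesis using faith[OF jd(1) paS] by blast
  qed
  have part2: "\<not> cond_eq d pe p i (pa GQ i)" if ub: "unblocked GP I j (pa GQ i)"
  proof -
    from unblocked_walk[OF ub jZi] obtain ps where p1: "ps \<noteq> []" and p2: "hd ps \<in> I"
     and p3: "last ps = j" and p4: "successively (\<lambda>a b. (a,b) \<in> GP) ps"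
     and p5: "set ps \<inter> pa GQ i = {}" by blast
    have "last ps \<in> {i,j}" using p3 by blast
    from good_path[OF p4 p1 this] obtain qs where q1: "qs \<noteq> []" and q2: "hd qs = hd ps"
      and q3: "last qs \<in> {i,j}" and q4: "set (butlast qs) \<inter> {i,j} = {}"
      and q5: "set qs \<subseteq> set ps" and q6: "successively (\<lambda>a b. (a,b) \<in> GP) qs" and q7: "distinct qs"
      by blast
    have hq: "hd qs \<in> I" using q2 p2 by simp
    have z0: "0 \<notin> set qs" using inside[OF q6 q1 hq] .
    have bz: "set qs \<inter> pa GQ i = {}" using q5 p5 by blast
    have bz': "set (butlast qs) \<inter> pa GQ i = {}" using bz by (meson disjoint_iff in_set_butlastD)
    have "d_connected (augment GP I) 0 i (pa GQ i)"
    proof (cases "last qs = i")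
      case True
      then show ?thesis using L_dir[OF GPd(2) q1 q7 q6 hq z0 bz'] by simp
    next
      case False
      then have lj: "last qs = j" using q3 by blast
      have iN: "i \<notin> set qs"
      proof
        assume "i \<in> set qs"
        then have "i \<in> set (butlast qs @ [last qs])" using q1 by simp
        then show False using q4 lj ij by auto
      qed
      have sc: "successively (\<lambda>a b. (a,b) \<in> GP) (qs @ [i])"
        using q6 q1 lj assms(5) by (simp add: successively_append_iff)
      have n1: "qs @ [i] \<noteq> []" by simp
      have n2: "distinct (qs @ [i])" using q7 iN by simp
      have n3: "hd (qs @ [i]) \<in> I" using hq q1 by simp
      have n4: "0 \<notin> set (qs @ [i])" using z0 jd by simp
      have n5: "set (butlast (qs @ [i])) \<inter> pa GQ i = {}" using bz by simp
      show ?thesis using L_dir[OF GPd(2) n1 n2 sc n3 n4 n5] by simp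
    qed
    then show ?thesis using faith[OF jd(2) paS] by blast
  qed
  show ?thesis using part1 part2 by blast
qed

end
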